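(* Let $d\ge1$, $G\in\mathrm{GL}_{1+d}(\mathbb{R})$, and let $g(\xi)=\boldsymbol{\pi}({}^tG\,\sigma(\xi))$ for $\xi\in\mathbb{R}^d$, $\|\xi\|<1$. Then in a neighbourhood of $\xi=0$, the differential $dg(\xi)$ (equivalently the mixed Hessian $\partial_{\tilde x}\partial_\xi\phi$ of the phase $\phi(\tilde x,\xi)=\langle\tilde x,g(\xi)\rangle_d+\langle\gamma,\sigma(\xi)\rangle$, $\gamma\in\mathbb{R}^{1+d}$) is non-degenerate if and only if the hyperplanes $P_0=\{0\}\times\mathbb{R}^d$ and $GP_0$ are not mutually perpendicular, i.e. if and only if $\langle e_0,G^{-1}e_0\rangle\neq 0$.
   Context: $\mathbb{R}^{1+d}$ has coordinates $(x_0,\dots,x_d)$, canonical basis $e_0,\dots,e_d$, Euclidean scalar product $\langle\cdot,\cdot\rangle$; $\langle\cdot,\cdot\rangle_d$ is the Euclidean scalar product on $\mathbb{R}^d$. $\sigma(\xi)=(\sqrt{1-\|\xi\|^2},\xi)$ for $\|\xi\|<1$. $\boldsymbol{\pi}:\mathbb{R}^{1+d}\to\mathbb{R}^d$ is the linear projection $(\xi_0,\xi_1,\dots,\xi_d)\mapsto(\xi_1,\dots,\xi_d)$. ${}^tG$ is the transpose of $G$. *)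

theory Defs
  imports "HOL-Analysis.Analysis"
begin

text \<open>R^{1+d} is modelled as real^('n option): index None is coordinate x_0,
  index Some j is coordinate x_j (j ranging over the d-element type 'n).\<close>

definition sigma :: "real^'n \<Rightarrow> real^('n option)" where
  "sigma \<xi> = (\<chi> i. case i of None \<Rightarrow> sqrt (1 - (norm \<xi>)\<^sup>2) | Some j \<Rightarrow> \<xi> $ j)"

definition proj :: "real^('n option) \<Rightarrow> real^'n" where
  "proj x = (\<chi> j. x $ Some j)"

definition gmap :: "real^('n option)^('n option) \<Rightarrow> real^'n \<Rightarrow> real^'n" where
  "gmap G \<xi> = proj (transpose G *v sigma \<xi>)"

definition e0 :: "real^('n::finite option)" where
  "e0 = axis None 1"

definition nondeg_diff :: "(real^'n \<Rightarrow> real^'n) \<Rightarrow> real^'n \<Rightarrow> bool" where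
  "nondeg_diff g \<xi> \<longleftrightarrow> (\<exists>D. (g has_derivative D) (at \<xi>) \<and> bij D)"

end

theory Submission imports Defs begin

definition ext :: "real^'n \<Rightarrow> real^('n option)" where
  "ext h = (\<chi> i. case i of None \<Rightarrow> 0 | Some k \<Rightarrow> h$k)"

definition D0 :: "real^('n option)^('n option) \<Rightarrow> real^'n \<Rightarrow> real^'n" where
  "D0 G h = proj (transpose G *v ext h)"

lemma ext_None[simp]: "ext h $ None = 0" and ext_Some[simp]: "ext h $ Some k = h $ k"
  by (simp_all add: ext_def)

lemma proj_Some[simp]: "proj x $ k = x $ Some k" by (simp add: proj_def)

lemma linear_ext: "linear ext"
  by (rule linearI) (auto simp: vec_eq_iff ext_def split: option.splits)

lemma linear_proj: "linear proj"
  by (rule linearI) (auto simp: vec_eq_iff)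

lemma linear_D0: "linear (D0 G)"
proof -
  have "D0 G = proj o ((*v) (transpose G)) o ext" by (rule ext) (simp add: D0_def)
  then show ?thesis
    using linear_compose[OF linear_compose[OF linear_ext matrix_vector_mul_linear] linear_proj]
    by (simp add: comp_assoc)
qed

lemma e0_None[simp]: "e0 $ None = 1" and e0_Some[simp]: "e0 $ Some k = 0"
  by (simp_all add: e0_def axis_def)

lemma sigma_eq: "sigma \<xi> = sqrt (1 - (norm \<xi>)\<^sup>2) *\<^sub>R e0 + ext \<xi>"
  by (auto simp: vec_eq_iff sigma_def split: option.splits)

lemma gmap_eq: "gmap G \<xi> = sqrt (1 - (norm \<xi>)\<^sup>2) *\<^sub>R proj (transpose G *v e0) + D0 G \<xi>"
  unfolding gmap_def D0_def sigma_eq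
  by (simp add: matrix_vector_right_distrib vec_eq_iff matrix_vector_mult_def sum_distrib_left sum.distrib algebra_simps)

lemma gmap_deriv:
  assumes "norm \<xi> < 1"
  shows "(gmap G has_derivative
     (\<lambda>h. (- (\<xi> \<bullet> h) / sqrt (1 - (norm \<xi>)\<^sup>2)) *\<^sub>R proj (transpose G *v e0) + D0 G h)) (at \<xi>)"
proof -
  have eq: "gmap G = (\<lambda>x. sqrt (1 - x \<bullet> x) *\<^sub>R proj (transpose G *v e0) + D0 G x)"
    by (rule ext) (simp add: gmap_eq power2_norm_eq_inner)
  have pos: "0 < 1 - \<xi> \<bullet> \<xi>" using assms
    by (metis abs_norm_cancel abs_square_less_1 diff_gt_0_iff_gt power2_norm_eq_inner)
  have ld: "(D0 G has_derivative D0 G) (at \<xi>)"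
    using linear_D0[of G] by (rule linear_imp_has_derivative)
  show ?thesis unfolding eq
    apply (rule has_derivative_eq_rhs)
     apply (rule has_derivative_add[OF _ ld])
    apply (rule derivative_intros pos)+
    apply (rule ext)
    using pos by (simp add: power2_norm_eq_inner inner_commute field_simps)
qed

lemma u_comp: "(e0 v* (H::real^'a^('n::finite option))) $ i = H $ None $ i"
  by (simp add: e0_def vector_matrix_mult_def axis_def if_distrib[of "\<lambda>x. x * _"] cong: if_cong)

lemma Mv_e0: "((M::real^('n::finite option)^'b) *v e0) $ i = M $ i $ None"
  by (simp add: e0_def matrix_vector_mult_def axis_def if_distrib[of "\<lambda>x. _ * x"] cong: if_cong)

lemma e0_inner: "e0 \<bullet> (x::real^('n::finite option)) = x $ None"
  unfolding e0_def by (subst inner_commute) (simp add: inner_axis)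

lemma vm_scaleR: "((r::real) *\<^sub>R x) v* (M::real^'a^'b) = r *\<^sub>R (x v* M)"
  by (simp add: vector_matrix_mult_def vec_eq_iff sum_distrib_left mult.assoc)

lemma tGu: assumes "(H::real^_^_) ** G = mat 1" shows "(e0 v* H) v* G = e0"
  by (simp add: vector_matrix_mul_assoc assms)

lemma lemA:
  fixes G H :: "real^('n::finite option)^('n option)"
  assumes "H ** G = mat 1" "inj (D0 G)"
  shows "H $ None $ None \<noteq> 0"
proof
  assume h0: "H $ None $ None = 0"
  define u where "u = e0 v* H"
  have ue: "u = ext (proj u)"
  proof (subst vec_eq_iff, intro allI)
    fix i show "u $ i = ext (proj u) $ i" by (cases i) (simp_all add: u_def u_comp h0)
  qed
  have "D0 G (proj u) = proj (u v* G)"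
    by (subst ue) (simp add: D0_def)
  also have "\<dots> = 0" using tGu[OF assms(1)] by (simp add: u_def vec_eq_iff)
  finally have "proj u = 0"
    using assms(2) linear_D0[of G] by (simp add: linear_injective_0)
  then have pu: "proj u = 0" .
  have "u = ext (proj u)" by (rule ue)
  also have "\<dots> = 0" using pu by (simp add: vec_eq_iff ext_def split: option.splits)
  finally have "u = 0" .
  then have "e0 = (0::real^('n option))" using tGu[OF assms(1)] by (simp add: u_def)
  then show False by (metis e0_None zero_index zero_neq_one)
qed

lemma lemB:
  fixes G H :: "real^('n::finite option)^('n option)"
  assumes "G ** H = mat 1" "H $ None $ None \<noteq> 0"
  shows "inj (D0 G)"
  unfolding linear_injective_0[OF linear_D0]
proof (intro allI impI)
  fix w
  assume "D0 G w = 0"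
  define v where "v = ext w v* G"
  have pv: "proj v = 0" using \<open>D0 G w = 0\<close> by (simp add: v_def D0_def)
  have v: "v = (v $ None) *\<^sub>R e0"
  proof (subst vec_eq_iff, intro allI)
    fix i show "v $ i = ((v $ None) *\<^sub>R e0) $ i"
    proof (cases i)
      case (Some k)
      have "v $ Some k = proj v $ k" by simp
      then show ?thesis using pv Some by simp
    qed simp
  qed
  have "ext w = ext w v* (G ** H)"
    by (simp add: assms)
  also have "\<dots> = v v* H" by (simp add: v_def vector_matrix_mul_assoc)
  also have "\<dots> = (v $ None) *\<^sub>R (e0 v* H)"
    by (subst v) (simp add: vm_scaleR)
  finally have ew: "ext w = (v $ None) *\<^sub>R (e0 v* H)" .
  have "0 = v $ None * H $ None $ None"
    using arg_cong[OF ew, of "\<lambda>x. x $ None"] by (simp add: u_comp)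
  then have "v $ None = 0" using assms(2) by simp
  then have "ext w = 0" using ew by simp
  then show "w = 0" by (metis ext_Some vec_eq_iff zero_index)
qed

theorem lemma5p4:
  fixes G :: "real^('n::finite option)^('n option)"
  assumes "invertible G"
  shows "(\<exists>e>0. \<forall>\<xi>::real^'n. norm \<xi> < e \<longrightarrow> nondeg_diff (gmap G) \<xi>)
         \<longleftrightarrow> e0 \<bullet> (matrix_inv G *v e0) \<noteq> 0"
proof -
  define H where "H = matrix_inv G"
  have GH: "G ** H = mat 1" "H ** G = mat 1"
    using assms unfolding invertible_def H_def matrix_inv_def by (metis (mono_tags, lifting) someI_ex)+
  have eH: "e0 \<bullet> (matrix_inv G *v e0) = H $ None $ None"
    by (simp add: H_def Mv_e0 e0_inner)
  define c where "c = proj (transpose G *v e0)"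
  let ?L = "\<lambda>\<xi> h. (- (\<xi> \<bullet> h) / sqrt (1 - (norm \<xi>)\<^sup>2)) *\<^sub>R c + D0 G h"
  have der: "\<And>\<xi>::real^'n. norm \<xi> < 1 \<Longrightarrow> (gmap G has_derivative ?L \<xi>) (at \<xi>)"
    unfolding c_def by (rule gmap_deriv)
  show ?thesis
  proof
    assume "\<exists>e>0. \<forall>\<xi>::real^'n. norm \<xi> < e \<longrightarrow> nondeg_diff (gmap G) \<xi>"
    then obtain e where e: "e > 0" "\<forall>\<xi>::real^'n. norm \<xi> < e \<longrightarrow> nondeg_diff (gmap G) \<xi>" by blast
    then have "nondeg_diff (gmap G) (0::real^'n)" by simp
    then obtain D where D: "(gmap G has_derivative D) (at 0)" "bij D"
      unfolding nondeg_diff_def by blast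
    have "D = ?L 0" using has_derivative_unique[OF D(1) der[of 0]] by simp
    then have "D = D0 G" by (simp add: fun_eq_iff)
    then have "inj (D0 G)" using D(2) bij_is_inj by blast
    then show "e0 \<bullet> (matrix_inv G *v e0) \<noteq> 0" using lemA[OF GH(2)] eH by simp
  next
    assume "e0 \<bullet> (matrix_inv G *v e0) \<noteq> 0"
    then have "inj (D0 G)" using lemB[OF GH(1)] eH by simp
    then obtain m where m: "m > 0" "\<And>x. m * norm x \<le> norm (D0 G x)"
      using linear_inj_bounded_below_pos[OF linear_D0] by blast
    define e where "e = min (1/2) (m / (2 * (norm c + 1)))"
    have "0 < 2 * (norm c + 1)" by (simp add: add_nonneg_pos)
    then have "m / (2 * (norm c + 1)) > 0" using m(1) by (intro divide_pos_pos)
    then have "e > 0" by (simp add: e_def)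
    moreover have "nondeg_diff (gmap G) \<xi>" if "norm \<xi> < e" for \<xi> :: "real^'n"
    proof -
      have n1: "norm \<xi> < 1/2" using that by (simp add: e_def)
      have n2: "norm \<xi> * (2 * (norm c + 1)) < m"
      proof -
        have "norm \<xi> < m / (2 * (norm c + 1))" using that by (simp add: e_def)
        then show ?thesis using \<open>0 < 2 * (norm c + 1)\<close> by (simp add: pos_less_divide_eq)
      qed
      define s where "s = sqrt (1 - (norm \<xi>)\<^sup>2)"
      have s: "s \<ge> 1/2"
      proof -
        have "norm \<xi> * norm \<xi> \<le> 1/2 * (1/2)"
          using n1 by (intro mult_mono) auto
        then have "(norm \<xi>)\<^sup>2 \<le> 1/4" by (simp add: power2_eq_square)
        then have "1 - (norm \<xi>)\<^sup>2 \<ge> (1/2)\<^sup>2" by (simp add: power2_eq_square)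
        then show ?thesis unfolding s_def using real_le_rsqrt by blast
      qed
      have n3: "norm \<xi> < 1" using n1 by simp
      have derx: "(gmap G has_derivative ?L \<xi>) (at \<xi>)" by (rule der[OF n3])
      have lin: "linear (?L \<xi>)"
        by (rule has_derivative_linear[OF derx])
      have inj: "inj (?L \<xi>)"
        unfolding linear_injective_0[OF lin]
      proof (intro allI impI)
        fix h assume "?L \<xi> h = 0"
        then have "D0 G h = ((\<xi> \<bullet> h) / s) *\<^sub>R c"
          by (simp add: s_def algebra_simps)
        then have "m * norm h \<le> \<bar>\<xi> \<bullet> h\<bar> / s * norm c" using m(2)[of h] s by simp
        also have "\<dots> \<le> (norm \<xi> * norm h) * 2 * norm c"
        proof -
          have "\<bar>\<xi> \<bullet> h\<bar> / s \<le> \<bar>\<xi> \<bullet> h\<bar> * 2"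
          proof -
            have "\<bar>\<xi> \<bullet> h\<bar> / s \<le> \<bar>\<xi> \<bullet> h\<bar> / (1/2)"
              using s by (intro divide_left_mono) auto
            then show ?thesis by simp
          qed
          also have "\<dots> \<le> (norm \<xi> * norm h) * 2" using Cauchy_Schwarz_ineq2 by simp
          finally have "\<bar>\<xi> \<bullet> h\<bar> / s * norm c \<le> (norm \<xi> * norm h) * 2 * norm c"
            by (rule mult_right_mono) simp
          then show ?thesis by simp
        qed
        finally have A: "m * norm h \<le> norm h * (norm \<xi> * 2 * norm c)" by (simp add: algebra_simps)
        show "h = 0"
        proof (rule ccontr)
          assume "h \<noteq> 0"
          then have "norm h > 0" by simp
          with A have "m \<le> norm \<xi> * 2 * norm c"
            by (metis mult.commute mult_le_cancel_left_pos)
          moreover have "norm \<xi> * 2 * norm c \<le> norm \<xi> * (2 * (norm c + 1))"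
            by (simp add: mult_left_mono algebra_simps)
          ultimately show False using n2 by simp
        qed
      qed
      then have "surj (?L \<xi>)" using lin linear_injective_imp_surjective by blast
      then show ?thesis unfolding nondeg_diff_def
        using derx inj bij_def by blast
    qed
    ultimately show "\<exists>e>0. \<forall>\<xi>::real^'n. norm \<xi> < e \<longrightarrow> nondeg_diff (gmap G) \<xi>" by blast
  qed
qed

end
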